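(* Let $F,B,H,R,Q\in\mathbb{R}^{2\times 2}$ and consider the target motion model $x_{t+1}=Fx_t+Bu_t+w_t$ with $w_t\sim\mathcal{N}(0,R)$, the measurement model $z_t=Hx_t+v_t$ with $v_t\sim\mathcal{N}(0,Q)$, and the spoofed measurement $\tilde z_t=z_t+\epsilon_t$ with spoofing signal $\epsilon_t\in\mathbb{R}^2$. Let $(m_t,\Sigma_t)_{t\ge 0}$ be produced by the Kalman filter started at $\mathcal{N}(m_0,\Sigma_0)$ and fed the true measurements $z_t$, with Kalman gains $K_t$, and let $(\tilde m_t,\tilde\Sigma_t)_{t\ge0}$ be produced by the Kalman filter started at $\mathcal{N}(\tilde m_0,\tilde\Sigma_0)$ and fed the spoofed measurements $\tilde z_t$, with Kalman gains $\tilde K_t$. Define for $t\ge 1$ $$A_t=F-\tilde K_tHF,\qquad B_t=(K_t-\tilde K_t)\big[z_t-H(Fm_{t-1}+Bu_{t-1})\big],\qquad C_t=-\tilde K_t\epsilon_t .$$ Then for every $t\ge 1$, $$m_t-\tilde m_t=\Big(\prod_{i=0}^{t-1}A_{t-i}\Big)(m_0-\tilde m_0)+\sum_{i=0}^{t-2}\Big(\prod_{j=0}^{i}A_{t-j}\Big)(B_{t-1-i}+C_{t-1-i})+B_t+C_t,$$ where $\prod_{j=0}^{i}A_{t-j}=A_tA_{t-1}\cdots A_{t-i}$.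
   Context: Kalman filter used: given an initial mean $m_0$ and covariance $\Sigma_0$ and measurements $y_1,y_2,\dots$, for $t\ge1$ set $\Sigma_{t|t-1}=F\Sigma_{t-1}F^T+R$, $K_t=\Sigma_{t|t-1}H^T(H\Sigma_{t|t-1}H^T+Q)^{-1}$, $\Sigma_t=(I-K_tH)\Sigma_{t|t-1}$, and the mean update $m_t=(I-K_tH)(Fm_{t-1}+Bu_{t-1})+K_ty_t$. The gains $K_t$ depend only on $\Sigma_0$ and the model matrices, not on the measurements. The filter producing $m_t$ uses $y_t=z_t$ and initial data $(m_0,\Sigma_0)$; the filter producing $\tilde m_t$ uses $y_t=\tilde z_t$ and initial data $(\tilde m_0,\tilde\Sigma_0)$, with its own gains $\tilde K_t$. The control inputs $u_t\in\mathbb{R}^2$ are the same for both filters. *)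

theory Defs
  imports "HOL-Analysis.Analysis"
begin

type_synonym mat2 = "real^2^2"
type_synonym vec2 = "real^2"

definition kf_pred :: "mat2 \<Rightarrow> mat2 \<Rightarrow> mat2 \<Rightarrow> mat2" where
  "kf_pred F R P = F ** P ** transpose F + R"

definition kf_gain_of :: "mat2 \<Rightarrow> mat2 \<Rightarrow> mat2 \<Rightarrow> mat2" where
  "kf_gain_of H Q P = P ** transpose H ** matrix_inv (H ** P ** transpose H + Q)"

fun kf_cov :: "mat2 \<Rightarrow> mat2 \<Rightarrow> mat2 \<Rightarrow> mat2 \<Rightarrow> mat2 \<Rightarrow> nat \<Rightarrow> mat2" where
  "kf_cov F H R Q S0 0 = S0"
| "kf_cov F H R Q S0 (Suc t) =
     (mat 1 - kf_gain_of H Q (kf_pred F R (kf_cov F H R Q S0 t)) ** H) ** kf_pred F R (kf_cov F H R Q S0 t)"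

text \<open>Kalman gain K_t (meaningful for t \<ge> 1).\<close>
definition kf_gain :: "mat2 \<Rightarrow> mat2 \<Rightarrow> mat2 \<Rightarrow> mat2 \<Rightarrow> mat2 \<Rightarrow> nat \<Rightarrow> mat2" where
  "kf_gain F H R Q S0 t = kf_gain_of H Q (kf_pred F R (kf_cov F H R Q S0 (t - 1)))"

text \<open>Posterior mean m_t, with controls u and measurements y (y 0 unused).\<close>
fun kf_mean :: "mat2 \<Rightarrow> mat2 \<Rightarrow> mat2 \<Rightarrow> mat2 \<Rightarrow> mat2 \<Rightarrow> vec2 \<Rightarrow> mat2 \<Rightarrow>
                (nat \<Rightarrow> vec2) \<Rightarrow> (nat \<Rightarrow> vec2) \<Rightarrow> nat \<Rightarrow> vec2" where
  "kf_mean F B H R Q m0 S0 u y 0 = m0"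
| "kf_mean F B H R Q m0 S0 u y (Suc t) =
     (mat 1 - kf_gain F H R Q S0 (Suc t) ** H) *v (F *v kf_mean F B H R Q m0 S0 u y t + B *v u t)
     + kf_gain F H R Q S0 (Suc t) *v y (Suc t)"

fun desc_prod :: "(nat \<Rightarrow> mat2) \<Rightarrow> nat \<Rightarrow> nat \<Rightarrow> mat2" where
  "desc_prod A t 0 = mat 1"
| "desc_prod A t (Suc n) = desc_prod A t n ** A (t - n)"

end

theory Submission
  imports Defs
begin

lemma desc_prod_Suc: "desc_prod A (Suc t) (Suc n) = A (Suc t) ** desc_prod A t n"
proof (induction n)
  case 0 then show ?case by (simp add: matrix_mul_rid matrix_mul_lid)
next
  case (Suc n)
  have "desc_prod A (Suc t) (Suc (Suc n)) = desc_prod A (Suc t) (Suc n) ** A (t - n)" by simp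
  also have "\<dots> = A (Suc t) ** (desc_prod A t n ** A (t - n))" using Suc by (simp add: matrix_mul_assoc)
  finally show ?case by simp
qed

lemma msum: "(M::mat2) *v (\<Sum>i\<in>S. f i) = (\<Sum>i\<in>S. M *v f i)"
  by (rule linear_sum[OF matrix_vector_mul_linear])

lemma unroll:
  fixes d E :: "nat \<Rightarrow> vec2" and A :: "nat \<Rightarrow> mat2"
  assumes rec: "\<And>s. d (Suc s) = A (Suc s) *v d s + E (Suc s)"
  shows "t \<ge> 1 \<Longrightarrow> d t = desc_prod A t t *v d 0 + (\<Sum>i<t - 1. desc_prod A t (Suc i) *v E (t - 1 - i)) + E t"
proof (induction t rule: dec_induct)
  case base
  show ?case using rec[of 0] by (simp add: matrix_mul_lid)
next
  case (step t)
  then obtain k where k: "t = Suc k" by (cases t) auto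
  have "d (Suc t) = A (Suc t) *v d t + E (Suc t)" by (rule rec)
  also have "\<dots> = A (Suc t) *v (desc_prod A t t *v d 0) + (\<Sum>i<k. A (Suc t) *v (desc_prod A t (Suc i) *v E (t - 1 - i)))
      + A (Suc t) *v E t + E (Suc t)"
    using step.IH unfolding k
    by (simp add: matrix_vector_right_distrib msum)
  also have "\<dots> = desc_prod A (Suc t) (Suc t) *v d 0
      + (\<Sum>i<k. desc_prod A (Suc t) (Suc (Suc i)) *v E (t - 1 - i))
      + desc_prod A (Suc t) (Suc 0) *v E t + E (Suc t)"
    by (simp only: desc_prod_Suc matrix_vector_mul_assoc desc_prod.simps(1) matrix_mul_rid)
  also have "(\<Sum>i<Suc t - 1. desc_prod A (Suc t) (Suc i) *v E (Suc t - 1 - i))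
      = (\<Sum>i<k. desc_prod A (Suc t) (Suc (Suc i)) *v E (t - 1 - i)) + desc_prod A (Suc t) (Suc 0) *v E t"
    unfolding k
  proof -
    have "Suc (Suc k) - 1 = Suc k" by simp
    then show "(\<Sum>i<Suc (Suc k) - 1. desc_prod A (Suc (Suc k)) (Suc i) *v E (Suc (Suc k) - 1 - i)) =
      (\<Sum>i<k. desc_prod A (Suc (Suc k)) (Suc (Suc i)) *v E (Suc k - 1 - i)) +
      desc_prod A (Suc (Suc k)) (Suc 0) *v E (Suc k)"
      by (simp only: sum.lessThan_Suc_shift) (simp add: add.commute del: desc_prod.simps)
  qed
  ultimately show ?case by (simp add: algebra_simps)
qed

theorem theorem1:
  fixes F B H R Q S0 S0' :: mat2 and m0 m0' :: vec2
    and u z \<epsilon> :: "nat \<Rightarrow> vec2" and t :: nat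
  defines "m \<equiv> kf_mean F B H R Q m0 S0 u z"
      and "m' \<equiv> kf_mean F B H R Q m0' S0' u (\<lambda>s. z s + \<epsilon> s)"
      and "K \<equiv> kf_gain F H R Q S0"
      and "K' \<equiv> kf_gain F H R Q S0'"
  defines "A \<equiv> (\<lambda>s. F - K' s ** H ** F)"
      and "Bt \<equiv> (\<lambda>s. (K s - K' s) *v (z s - H *v (F *v m (s - 1) + B *v u (s - 1))))"
      and "C \<equiv> (\<lambda>s. - (K' s *v \<epsilon> s))"
  assumes "t \<ge> 1"
  shows "m t - m' t =
           desc_prod A t t *v (m0 - m0')
         + (\<Sum>i<t - 1. desc_prod A t (Suc i) *v (Bt (t - 1 - i) + C (t - 1 - i)))
         + Bt t + C t"
proof -
  have rec: "\<And>s. (m (Suc s) - m' (Suc s)) = A (Suc s) *v (m s - m' s) + (Bt (Suc s) + C (Suc s))"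
    unfolding m_def m'_def A_def Bt_def C_def K_def K'_def
    by (simp add: matrix_vector_mult_diff_rdistrib matrix_vector_mul_assoc[symmetric]
        matrix_vector_mul_lid matrix_vector_right_distrib matrix_vector_mult_diff_distrib algebra_simps)
  show ?thesis
    using unroll[of "\<lambda>s. m s - m' s" A "\<lambda>s. Bt s + C s", OF rec, OF assms(8)]
    by (simp add: m_def m'_def algebra_simps)
qed

end
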